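(* The set $G^*\operatorname{cone}\big(\mathbb{R}^m_- -(G\bar u-b)\big)^\circ$ is a weakly-$*$ closed subset of $L^\infty(\Lambda)^*$.
   Context: Let $\Lambda\subset\mathbb{R}^d$ be bounded and Lebesgue measurable, $f:L^2(\Lambda)\to\mathbb{R}$ continuously Fréchet differentiable, $G:L^2(\Lambda)\to\mathbb{R}^m$ linear and bounded, $b\in\mathbb{R}^m$, $u_a,u_b\in L^\infty(\Lambda)$ with $u_a+\delta\le u_b$ a.e. for some $\delta>0$. Consider the problem: minimize $f(u)$ subject to $u_a\le u\le u_b$ a.e. in $\Lambda$ and $Gu\le b$. Assume there is $\hat u\in L^\infty(\Lambda)$ with $G\hat u\le b$ and $u_a+\rho\le\hat u\le u_b-\rho$ a.e. for some $\rho>0$. Let $\bar u\in L^\infty(\Lambda)$ be a locally optimal solution of this problem. $G$ is also regarded as a map on $L^\infty(\Lambda)\hookrightarrow L^2(\Lambda)$, with adjoint $G^*:\mathbb{R}^m\to L^\infty(\Lambda)^*$. $\mathbb{R}^m_-:=\{v\in\mathbb{R}^m:v\le0\}$, $\operatorname{cone}$ denotes the conic hull, and $K^\circ:=\{w\in\mathbb{R}^m: w^\top v\le 0\ \forall v\in K\}$ the polar cone. *)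

theory Defs
  imports "HOL-Analysis.Analysis"
begin

text \<open>Functions on the domain are represented by total functions; all notions
below only look at their restriction to the domain, modulo null sets of
Lebesgue measure restricted to the domain.\<close>

definition Linf :: "('d::euclidean_space) set \<Rightarrow> ('d \<Rightarrow> real) set" where
  "Linf Lam = {u. u \<in> borel_measurable (lebesgue_on Lam) \<and>
                 (\<exists>C. AE x in lebesgue_on Lam. \<bar>u x\<bar> \<le> C)}"

definition L2 :: "('d::euclidean_space) set \<Rightarrow> ('d \<Rightarrow> real) set" where
  "L2 Lam = {u. u \<in> borel_measurable (lebesgue_on Lam) \<and>
               integrable (lebesgue_on Lam) (\<lambda>x. (u x)\<^sup>2)}"

definition l2norm :: "('d::euclidean_space) set \<Rightarrow> ('d \<Rightarrow> real) \<Rightarrow> real" where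
  "l2norm Lam u = sqrt (integral\<^sup>L (lebesgue_on Lam) (\<lambda>x. (u x)\<^sup>2))"

definition bdd_lin_L2 :: "('d::euclidean_space) set \<Rightarrow> (('d \<Rightarrow> real) \<Rightarrow> real) \<Rightarrow> bool" where
  "bdd_lin_L2 Lam A \<longleftrightarrow>
     (\<forall>u\<in>L2 Lam. \<forall>v\<in>L2 Lam. \<forall>a c. A (\<lambda>x. a * u x + c * v x) = a * A u + c * A v) \<and>
     (\<exists>C. \<forall>u\<in>L2 Lam. \<bar>A u\<bar> \<le> C * l2norm Lam u)"

definition frechet_L2 ::
  "('d::euclidean_space) set \<Rightarrow> (('d \<Rightarrow> real) \<Rightarrow> real) \<Rightarrow> ('d \<Rightarrow> real) \<Rightarrow> (('d \<Rightarrow> real) \<Rightarrow> real) \<Rightarrow> bool" where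
  "frechet_L2 Lam f u A \<longleftrightarrow> bdd_lin_L2 Lam A \<and>
     (\<forall>e>0. \<exists>r>0. \<forall>h\<in>L2 Lam. l2norm Lam h < r \<longrightarrow>
        \<bar>f (\<lambda>x. u x + h x) - f u - A h\<bar> \<le> e * l2norm Lam h)"

definition C1_L2 :: "('d::euclidean_space) set \<Rightarrow> (('d \<Rightarrow> real) \<Rightarrow> real) \<Rightarrow> bool" where
  "C1_L2 Lam f \<longleftrightarrow> (\<exists>Df. (\<forall>u\<in>L2 Lam. frechet_L2 Lam f u (Df u)) \<and>
     (\<forall>u\<in>L2 Lam. \<forall>e>0. \<exists>r>0. \<forall>v\<in>L2 Lam.
        l2norm Lam (\<lambda>x. v x - u x) < r \<longrightarrow>
        (\<forall>h\<in>L2 Lam. \<bar>Df v h - Df u h\<bar> \<le> e * l2norm Lam h)))"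

text \<open>The dual space of L-infinity: bounded linear functionals, represented as
extensional functions on the set of L-infinity representatives.\<close>
definition Linf_dual :: "('d::euclidean_space) set \<Rightarrow> (('d \<Rightarrow> real) \<Rightarrow> real) set" where
  "Linf_dual Lam = {phi. phi \<in> extensional (Linf Lam) \<and>
     (\<forall>u\<in>Linf Lam. \<forall>v\<in>Linf Lam. \<forall>a c. phi (\<lambda>x. a * u x + c * v x) = a * phi u + c * phi v) \<and>
     (\<exists>C\<ge>0. \<forall>u\<in>Linf Lam. \<forall>c. (AE x in lebesgue_on Lam. \<bar>u x\<bar> \<le> c) \<longrightarrow> \<bar>phi u\<bar> \<le> C * c)}"

text \<open>Weak-* topology: initial topology of the evaluations at elements of L-infinity.\<close>
definition weak_star :: "('d::euclidean_space) set \<Rightarrow> (('d \<Rightarrow> real) \<Rightarrow> real) topology" where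
  "weak_star Lam = subtopology (product_topology (\<lambda>_. euclideanreal) (Linf Lam)) (Linf_dual Lam)"

definition adjG :: "('d::euclidean_space) set \<Rightarrow> (('d \<Rightarrow> real) \<Rightarrow> real^'m) \<Rightarrow> real^'m \<Rightarrow> (('d \<Rightarrow> real) \<Rightarrow> real)" where
  "adjG Lam G w = restrict (\<lambda>u. w \<bullet> G u) (Linf Lam)"

definition nonpos_orthant :: "(real^'m) set" where
  "nonpos_orthant = {v. \<forall>i. v $ i \<le> 0}"

definition polar_cone :: "(real^'m) set \<Rightarrow> (real^'m) set" where
  "polar_cone K = {w. \<forall>v\<in>K. w \<bullet> v \<le> 0}"

definition feasible ::
  "('d::euclidean_space) set \<Rightarrow> (('d \<Rightarrow> real) \<Rightarrow> real^'m) \<Rightarrow> real^'m \<Rightarrow> ('d \<Rightarrow> real) \<Rightarrow> ('d \<Rightarrow> real) \<Rightarrow> ('d \<Rightarrow> real) \<Rightarrow> bool" where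
  "feasible Lam G b ua ub u \<longleftrightarrow> u \<in> L2 Lam \<and>
     (AE x in lebesgue_on Lam. ua x \<le> u x \<and> u x \<le> ub x) \<and> (\<forall>i. G u $ i \<le> b $ i)"

end

theory Submission
  imports Defs
begin

lemma Linf_L2:
  assumes "Lam \<in> sets lebesgue" "bounded Lam" "u \<in> Linf Lam"
  shows "u \<in> L2 Lam"
proof -
  have lm: "Lam \<in> lmeasurable" using assms bounded_set_imp_lmeasurable by blast
  interpret finite_measure "lebesgue_on Lam" using finite_measure_lebesgue_on[OF lm] .
  obtain C where C: "AE x in lebesgue_on Lam. \<bar>u x\<bar> \<le> C" and m: "u \<in> borel_measurable (lebesgue_on Lam)"
    using assms(3) unfolding Linf_def by blast
  have "AE x in lebesgue_on Lam. norm ((u x)\<^sup>2) \<le> C\<^sup>2"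
    using C by eventually_elim (simp, metis abs_ge_zero power2_abs power_mono)
  moreover have "(\<lambda>x. (u x)\<^sup>2) \<in> borel_measurable (lebesgue_on Lam)" using m by measurable
  ultimately have "integrable (lebesgue_on Lam) (\<lambda>x. (u x)\<^sup>2)"
    by (intro integrable_const_bound) 
  then show ?thesis using m unfolding L2_def by blast
qed

lemma Linf_lin:
  assumes "u \<in> Linf Lam" "v \<in> Linf Lam"
  shows "(\<lambda>x. a * u x + c * v x) \<in> Linf Lam"
proof -
  obtain C where C: "AE x in lebesgue_on Lam. \<bar>u x\<bar> \<le> C" and m: "u \<in> borel_measurable (lebesgue_on Lam)"
    using assms(1) unfolding Linf_def by blast
  obtain D where D: "AE x in lebesgue_on Lam. \<bar>v x\<bar> \<le> D" and m2: "v \<in> borel_measurable (lebesgue_on Lam)"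
    using assms(2) unfolding Linf_def by blast
  have "AE x in lebesgue_on Lam. \<bar>a * u x + c * v x\<bar> \<le> \<bar>a\<bar> * C + \<bar>c\<bar> * D"
    using C D
  proof eventually_elim
    case (elim x)
    have "\<bar>a * u x + c * v x\<bar> \<le> \<bar>a\<bar> * \<bar>u x\<bar> + \<bar>c\<bar> * \<bar>v x\<bar>"
      by (metis abs_mult abs_triangle_ineq)
    also have "\<dots> \<le> \<bar>a\<bar> * C + \<bar>c\<bar> * D"
      using elim by (intro add_mono mult_left_mono) auto
    finally show ?case .
  qed
  moreover have "(\<lambda>x. a * u x + c * v x) \<in> borel_measurable (lebesgue_on Lam)" using m m2 by measurable
  ultimately show ?thesis unfolding Linf_def by blast
qed

lemma l2norm_bound:
  assumes "Lam \<in> sets lebesgue" "bounded Lam" "u \<in> Linf Lam"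
    and c: "AE x in lebesgue_on Lam. \<bar>u x\<bar> \<le> c"
  shows "l2norm Lam u \<le> c * sqrt (measure (lebesgue_on Lam) (space (lebesgue_on Lam)))"
proof -
  have lm: "Lam \<in> lmeasurable" using assms bounded_set_imp_lmeasurable by blast
  interpret finite_measure "lebesgue_on Lam" using finite_measure_lebesgue_on[OF lm] .
  let ?M = "measure (lebesgue_on Lam) (space (lebesgue_on Lam))"
  have int: "integrable (lebesgue_on Lam) (\<lambda>x. (u x)\<^sup>2)" using Linf_L2[OF assms(1-3)] unfolding L2_def by blast
  have "integral\<^sup>L (lebesgue_on Lam) (\<lambda>x. (u x)\<^sup>2) \<le> integral\<^sup>L (lebesgue_on Lam) (\<lambda>x. c\<^sup>2)"
    using int proof (intro integral_mono_AE)
    show "AE x in lebesgue_on Lam. (u x)\<^sup>2 \<le> c\<^sup>2" using c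
      by eventually_elim (metis abs_ge_zero power2_abs power_mono)
  qed auto
  also have "\<dots> = c\<^sup>2 * ?M" by simp
  finally have le: "integral\<^sup>L (lebesgue_on Lam) (\<lambda>x. (u x)\<^sup>2) \<le> c\<^sup>2 * ?M" .
  show ?thesis
  proof (cases "c < 0")
    case True
    have "AE x in lebesgue_on Lam. False" using c by (rule AE_mp) (use True in auto)
    then have "emeasure (lebesgue_on Lam) (space (lebesgue_on Lam)) = 0" using ae_filter_eq_bot_iff trivial_limit_def by metis
    then have M0: "?M = 0" by (simp add: measure_def)
    have "AE x in lebesgue_on Lam. (u x)\<^sup>2 = 0" 
      using \<open>AE x in lebesgue_on Lam. False\<close> by (rule AE_mp) auto
    then have "integral\<^sup>L (lebesgue_on Lam) (\<lambda>x. (u x)\<^sup>2) = 0" by (simp add: integral_eq_zero_AE)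
    then show ?thesis using M0 by (simp add: l2norm_def)
  next
    case False
    have "l2norm Lam u \<le> sqrt (c\<^sup>2 * ?M)" unfolding l2norm_def using le by simp
    also have "\<dots> = c * sqrt ?M" using False by (simp add: real_sqrt_mult)
    finally show ?thesis .
  qed
qed

lemma adjG_dual:
  fixes G :: "(real^'d \<Rightarrow> real) \<Rightarrow> real^'m"
  assumes "Lam \<in> sets lebesgue" "bounded Lam"
    and G_lin: "\<forall>u\<in>L2 Lam. \<forall>v\<in>L2 Lam. \<forall>a c. G (\<lambda>x. a * u x + c * v x) = a *\<^sub>R G u + c *\<^sub>R G v"
    and G_bdd: "\<exists>C. \<forall>u\<in>L2 Lam. norm (G u) \<le> C * l2norm Lam u"
  shows "adjG Lam G w \<in> Linf_dual Lam"
proof -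
  obtain C where C: "\<forall>u\<in>L2 Lam. norm (G u) \<le> C * l2norm Lam u" using G_bdd by blast
  let ?M = "measure (lebesgue_on Lam) (space (lebesgue_on Lam))"
  define K where "K = norm w * max C 0 * sqrt ?M"
  have K0: "K \<ge> 0" unfolding K_def by simp
  have l2pos: "l2norm Lam u \<ge> 0" for u unfolding l2norm_def by simp
  have bnd: "\<bar>adjG Lam G w u\<bar> \<le> K * c" if u: "u \<in> Linf Lam" and c: "AE x in lebesgue_on Lam. \<bar>u x\<bar> \<le> c" for u c
  proof -
    have uL2: "u \<in> L2 Lam" using Linf_L2 assms u by blast
    have "\<bar>adjG Lam G w u\<bar> = \<bar>w \<bullet> G u\<bar>" using u by (simp add: adjG_def)
    also have "\<dots> \<le> norm w * norm (G u)" by (rule Cauchy_Schwarz_ineq2)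
    also have "\<dots> \<le> norm w * (max C 0 * l2norm Lam u)"
      using C uL2 l2pos[of u]
      by (intro mult_left_mono) (auto intro: order_trans[OF _ mult_right_mono[of C "max C 0"]])
    also have "\<dots> \<le> norm w * (max C 0 * (c * sqrt ?M))"
      using l2norm_bound[OF assms(1,2) u c] by (intro mult_left_mono) auto
    also have "\<dots> = K * c" unfolding K_def by simp
    finally show ?thesis .
  qed
  have lin: "adjG Lam G w (\<lambda>x. a * u x + c * v x) = a * adjG Lam G w u + c * adjG Lam G w v"
    if "u \<in> Linf Lam" "v \<in> Linf Lam" for u v a c
    using that Linf_lin[OF that, of a c] Linf_L2[OF assms(1,2)] G_lin
    by (simp add: adjG_def inner_add_right)
  show ?thesis unfolding Linf_dual_def using bnd lin K0
    by (auto simp: adjG_def)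
qed

lemma cch_sum:
  assumes "finite A" "\<And>i. i \<in> A \<Longrightarrow> f i \<in> convex_cone hull S"
  shows "sum f A \<in> convex_cone hull S"
  using assms by (induction A rule: finite_induct)
    (auto intro: convex_cone_hull_add convex_cone_hull_contains_0)

lemma polar_eq:
  fixes c :: "real^'m" assumes c: "\<forall>i. c$i \<le> 0"
  shows "polar_cone (cone hull ((\<lambda>v. v - c) ` nonpos_orthant))
       = convex_cone hull ((\<lambda>i. axis i 1) ` {i. c$i = 0})"
proof -
  define P0 where "P0 = {w::real^'m. \<forall>i. 0 \<le> w$i \<and> (c$i \<noteq> 0 \<longrightarrow> w$i = 0)}"
  have "polar_cone (cone hull ((\<lambda>v. v - c) ` nonpos_orthant)) = P0"
  proof
    show "polar_cone (cone hull ((\<lambda>v. v - c) ` nonpos_orthant)) \<subseteq> P0"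
    proof
      fix w assume w: "w \<in> polar_cone (cone hull ((\<lambda>v. v - c) ` nonpos_orthant))"
      have key: "w \<bullet> (v - c) \<le> 0" if "v \<in> nonpos_orthant" for v
      proof -
        have "v - c \<in> cone hull ((\<lambda>v. v - c) ` nonpos_orthant)"
          using that by (intro hull_inc) auto
        then show ?thesis using w unfolding polar_cone_def by blast
      qed
      show "w \<in> P0" unfolding P0_def mem_Collect_eq
      proof (intro allI conjI impI)
        fix i
        have "c - axis i 1 \<in> nonpos_orthant" using c
          by (auto simp: nonpos_orthant_def axis_def intro: order_trans[of _ 0])
        from key[OF this] show "0 \<le> w$i" by (simp add: inner_axis)
        have "c - axis i (c$i) \<in> nonpos_orthant" using c
          by (auto simp: nonpos_orthant_def axis_def)
        from key[OF this] have "0 \<le> w$i * c$i" by (simp add: inner_axis)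
        moreover assume "c$i \<noteq> 0"
        ultimately show "w$i = 0" using c[rule_format, of i] \<open>0 \<le> w$i\<close>
          by (simp add: zero_le_mult_iff)
      qed
    qed
  next
    show "P0 \<subseteq> polar_cone (cone hull ((\<lambda>v. v - c) ` nonpos_orthant))"
    proof
      fix w assume w: "w \<in> P0"
      show "w \<in> polar_cone (cone hull ((\<lambda>v. v - c) ` nonpos_orthant))"
        unfolding polar_cone_def cone_hull_expl
      proof (safe)
        fix t :: real and y and v :: "real^'m" assume t: "0 \<le> t" and v: "v \<in> nonpos_orthant"
        have wc: "w \<bullet> c = 0" unfolding inner_vec_def
          using w by (intro sum.neutral) (auto simp: P0_def)
        have wv: "w \<bullet> v \<le> 0" unfolding inner_vec_def
          using w v by (intro sum_nonpos) (auto simp: P0_def nonpos_orthant_def mult_nonneg_nonpos)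
        show "w \<bullet> (t *\<^sub>R (v - c)) \<le> 0"
          using wc wv t by (simp add: inner_diff_right mult_nonneg_nonpos)
      qed
    qed
  qed
  also have "P0 = convex_cone hull ((\<lambda>i. axis i 1) ` {i. c$i = 0})"
  proof
    show "convex_cone hull ((\<lambda>i. axis i 1) ` {i. c$i = 0}) \<subseteq> P0"
    proof (rule hull_minimal)
      show "(\<lambda>i. axis i 1) ` {i. c$i = 0} \<subseteq> P0" by (auto simp: P0_def axis_def)
      show "convex_cone P0" unfolding convex_cone_def
      proof (intro conjI)
        have "0 \<in> P0" by (simp add: P0_def)
        then show "P0 \<noteq> {}" by blast
        show "convex P0" unfolding convex_def P0_def by auto
        show "conic P0" unfolding conic_def P0_def by auto
      qed
    qed
  next
    show "P0 \<subseteq> convex_cone hull ((\<lambda>i. axis i 1) ` {i. c$i = 0})"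
    proof
      fix w assume w: "w \<in> P0"
      have "w = (\<Sum>i\<in>UNIV. (w$i) *s axis i 1)" by (simp add: basis_expansion)
      also have "\<dots> \<in> convex_cone hull ((\<lambda>i. axis i 1) ` {i. c$i = 0})"
      proof (rule cch_sum)
        fix i :: 'm
        show "w $ i *s axis i 1 \<in> convex_cone hull ((\<lambda>i. axis i 1) ` {i. c$i = 0})"
        proof (cases "c$i = 0")
          case True
          then show ?thesis using w unfolding scalar_mult_eq_scaleR
            by (intro convex_cone_hull_mul hull_inc) (auto simp: P0_def)
        next
          case False
          then show ?thesis using w by (simp add: P0_def convex_cone_hull_contains_0)
        qed
      qed simp
      finally show "w \<in> convex_cone hull ((\<lambda>i. axis i 1) ` {i. c$i = 0})" .
    qed
  qed
  finally show ?thesis .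
qed

lemma cm_scaleR:
  fixes f :: "'a \<Rightarrow> real" and b :: "'b::real_normed_vector"
  assumes "continuous_map X euclideanreal f"
  shows "continuous_map X euclidean (\<lambda>x. f x *\<^sub>R b)"
  using assms unfolding continuous_map_atin by (auto intro: tendsto_scaleR)

theorem lemmaA1:
  fixes Lam :: "(real^'d) set"
    and f :: "(real^'d \<Rightarrow> real) \<Rightarrow> real"
    and G :: "(real^'d \<Rightarrow> real) \<Rightarrow> real^'m"
    and b :: "real^'m"
    and ua ub uhat ubar :: "real^'d \<Rightarrow> real"
    and delta rho :: real
  assumes Lam_meas: "Lam \<in> sets lebesgue" and Lam_bdd: "bounded Lam"
    and f_ae: "\<forall>u\<in>L2 Lam. \<forall>v\<in>L2 Lam. (AE x in lebesgue_on Lam. u x = v x) \<longrightarrow> f u = f v"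
    and f_C1: "C1_L2 Lam f"
    and G_lin: "\<forall>u\<in>L2 Lam. \<forall>v\<in>L2 Lam. \<forall>a c. G (\<lambda>x. a * u x + c * v x) = a *\<^sub>R G u + c *\<^sub>R G v"
    and G_bdd: "\<exists>C. \<forall>u\<in>L2 Lam. norm (G u) \<le> C * l2norm Lam u"
    and ua: "ua \<in> Linf Lam" and ub: "ub \<in> Linf Lam"
    and delta: "delta > 0" "AE x in lebesgue_on Lam. ua x + delta \<le> ub x"
    and uhat: "uhat \<in> Linf Lam" "\<forall>i. G uhat $ i \<le> b $ i" "rho > 0"
      "AE x in lebesgue_on Lam. ua x + rho \<le> uhat x \<and> uhat x \<le> ub x - rho"
    and ubar: "ubar \<in> Linf Lam" "feasible Lam G b ua ub ubar"
    and ubar_locopt: "\<exists>r>0. \<forall>u. feasible Lam G b ua ub u \<and> l2norm Lam (\<lambda>x. u x - ubar x) < r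
                          \<longrightarrow> f ubar \<le> f u"
  shows "closedin (weak_star Lam)
           (adjG Lam G ` polar_cone (cone hull ((\<lambda>v. v - (G ubar - b)) ` nonpos_orthant)))"
proof -
  define X where "X = weak_star Lam"
  define T where "T = adjG Lam G"
  define c where "c = G ubar - b"
  have c0: "\<forall>i. c$i \<le> 0" using ubar(2) by (simp add: c_def feasible_def)
  define E where "E = (\<lambda>i. axis i (1::real)) ` {i. c$i = 0}"
  define P where "P = polar_cone (cone hull ((\<lambda>v. v - c) ` nonpos_orthant))"
  have PE: "P = convex_cone hull E" unfolding P_def E_def by (rule polar_eq[OF c0])
  have ext: "Linf_dual Lam \<subseteq> extensional (Linf Lam)" unfolding Linf_dual_def by blast
  have topX: "topspace X = Linf_dual Lam"
    unfolding X_def weak_star_def topspace_subtopology topspace_product_topology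
    using ext by (auto simp: PiE_def)
  obtain B where B: "B \<subseteq> G ` Linf Lam" "independent B" "G ` Linf Lam \<subseteq> span B"
    by (rule maximal_independent_subset)
  have finB: "finite B" using B(2) by (rule finiteI_independent)
  define pick where "pick bb = (SOME u. u \<in> Linf Lam \<and> G u = bb)" for bb
  have pick: "pick bb \<in> Linf Lam \<and> G (pick bb) = bb" if bbB: "bb \<in> B" for bb
  proof -
    obtain u where "u \<in> Linf Lam" "bb = G u" using bbB B(1) by blast
    then have "\<exists>u. u \<in> Linf Lam \<and> G u = bb" by blast
    then show ?thesis unfolding pick_def by (rule someI_ex)
  qed
  have ex: "\<exists>a. G u = (\<Sum>v\<in>B. a v *\<^sub>R v)" if "u \<in> Linf Lam" for u
  proof -
    have "G u \<in> span B" using B(3) that by blast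
    then show ?thesis unfolding span_finite[OF finB] by (auto simp: image_iff)
  qed
  define coef where "coef u = (SOME a. G u = (\<Sum>v\<in>B. a v *\<^sub>R v))" for u
  have coef: "G u = (\<Sum>v\<in>B. coef u v *\<^sub>R v)" if "u \<in> Linf Lam" for u
    unfolding coef_def using ex[OF that] by (rule someI_ex)
  define Mm where "Mm w = (\<Sum>bb\<in>B. (w \<bullet> bb) *\<^sub>R bb)" for w :: "real^'m"
  have linM: "linear Mm"
    by (rule linearI) (simp_all add: Mm_def inner_add_left scaleR_add_left sum.distrib scaleR_sum_right)
  define gm where "gm phi = (\<Sum>bb\<in>B. phi (pick bb) *\<^sub>R bb)" for phi :: "(real^'d \<Rightarrow> real) \<Rightarrow> real"
  define Q where "Q = convex_cone hull (Mm ` E)"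
  have QP: "Q = Mm ` P" unfolding Q_def PE by (rule convex_cone_hull_linear_image[OF linM])
  have closedQ: "closed Q" unfolding Q_def E_def
    by (intro closed_convex_cone_hull finite_imageI) simp
  have proj: "continuous_map X euclideanreal (\<lambda>phi. phi u)" if "u \<in> Linf Lam" for u
    unfolding X_def weak_star_def
    by (rule continuous_map_from_subtopology)
       (rule continuous_map_product_projection[OF that, where X = "\<lambda>_. euclideanreal", simplified])
  define S1 where "S1 = {phi \<in> topspace X. gm phi \<in> Q}"
  define S2 where "S2 u = {phi \<in> topspace X. phi u - (\<Sum>bb\<in>B. coef u bb * phi (pick bb)) \<in> {0}}" for u
  have cS1: "closedin X S1" unfolding S1_def
  proof (rule closedin_continuous_map_preimage)
    show "continuous_map X euclidean gm" unfolding gm_def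
      using pick proj finB by (intro continuous_map_sum cm_scaleR) auto
    show "closedin euclidean Q" using closedQ by simp
  qed
  have cS2: "closedin X (S2 u)" if "u \<in> Linf Lam" for u unfolding S2_def
  proof (rule closedin_continuous_map_preimage)
    show "continuous_map X euclideanreal (\<lambda>phi. phi u - (\<Sum>bb\<in>B. coef u bb * phi (pick bb)))"
      using pick proj finB that
      by (intro continuous_map_diff continuous_map_sum continuous_map_real_mult_left) auto
  qed simp
  have ne: "Linf Lam \<noteq> {}" using ubar(1) by blast
  have eq: "T ` P = S1 \<inter> (\<Inter>u\<in>Linf Lam. S2 u)"
  proof
    show "T ` P \<subseteq> S1 \<inter> (\<Inter>u\<in>Linf Lam. S2 u)"
    proof
      fix phi assume "phi \<in> T ` P"
      then obtain w where w: "w \<in> P" and phi: "phi = T w" by blast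
      have top: "phi \<in> topspace X" unfolding topX phi T_def
        by (rule adjG_dual[OF Lam_meas Lam_bdd G_lin G_bdd])
      have pv: "phi (pick bb) = w \<bullet> bb" if "bb \<in> B" for bb
        using pick[OF that] by (simp add: phi T_def adjG_def)
      have "gm phi = Mm w" unfolding gm_def Mm_def using pv by (intro sum.cong) auto
      then have "gm phi \<in> Q" using w QP by auto
      moreover have "phi \<in> S2 u" if u: "u \<in> Linf Lam" for u
      proof -
        have "phi u = w \<bullet> G u" using u by (simp add: phi T_def adjG_def)
        also have "\<dots> = (\<Sum>bb\<in>B. coef u bb * (w \<bullet> bb))"
          by (simp add: coef[OF u] inner_sum_right)
        also have "\<dots> = (\<Sum>bb\<in>B. coef u bb * phi (pick bb))" using pv by simp
        finally show ?thesis using top by (simp add: S2_def)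
      qed
      ultimately show "phi \<in> S1 \<inter> (\<Inter>u\<in>Linf Lam. S2 u)" using top by (auto simp: S1_def)
    qed
  next
    show "S1 \<inter> (\<Inter>u\<in>Linf Lam. S2 u) \<subseteq> T ` P"
    proof
      fix phi assume phi: "phi \<in> S1 \<inter> (\<Inter>u\<in>Linf Lam. S2 u)"
      then have top: "phi \<in> Linf_dual Lam" and "gm phi \<in> Q" using topX by (auto simp: S1_def)
      then obtain w where w: "w \<in> P" and gw: "gm phi = Mm w" using QP by auto
      have sum0: "(\<Sum>bb\<in>B. (phi (pick bb) - w \<bullet> bb) *\<^sub>R bb) = 0"
        using gw by (simp add: gm_def Mm_def scaleR_diff_left sum_subtractf)
      have pv: "phi (pick bb) = w \<bullet> bb" if bbB: "bb \<in> B" for bb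
      proof (rule ccontr)
        assume ne: "phi (pick bb) \<noteq> w \<bullet> bb"
        have "dependent B" unfolding dependent_finite[OF finB]
          by (rule exI[of _ "\<lambda>bb. phi (pick bb) - w \<bullet> bb"]) (use sum0 ne bbB in auto)
        then show False using B(2) by blast
      qed
      have "phi = T w"
      proof
        fix u
        show "phi u = T w u"
        proof (cases "u \<in> Linf Lam")
          case True
          then have "phi u = (\<Sum>bb\<in>B. coef u bb * phi (pick bb))"
            using phi by (auto simp: S2_def)
          also have "\<dots> = (\<Sum>bb\<in>B. coef u bb * (w \<bullet> bb))" using pv by simp
          also have "\<dots> = w \<bullet> G u" by (simp add: coef[OF True] inner_sum_right)
          finally show ?thesis using True by (simp add: T_def adjG_def)
        next
          case False
          have "phi \<in> extensional (Linf Lam)" using top ext by blast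
          then have "phi u = undefined" using False by (rule extensional_arb)
          then show ?thesis using False by (simp add: T_def adjG_def)
        qed
      qed
      then show "phi \<in> T ` P" using w by blast
    qed
  qed
  have "closedin X (S1 \<inter> (\<Inter>u\<in>Linf Lam. S2 u))"
    by (rule closedin_Int[OF cS1 closedin_INT[OF ne cS2]])
  then show ?thesis unfolding eq[symmetric] X_def T_def P_def c_def .
qed

end
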